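(* In the setting of the $i$-th horizontal composition (with $\psi$ dinatural in its $i$-th variable), if $\psi$ is also dinatural in its $j$-th variable for some $j\ne i$, then $\phi\ast_i\psi$ is dinatural in its variable $B_j$.
   Context: Notation: $k$ also denotes $\{1,\dots,k\}$; $\mathbb C^\alpha=\mathbb C^{\alpha_1}\times\cdots$ with $\mathbb C^+=\mathbb C$, $\mathbb C^-=\mathbb C^{op}$; for $\mathbf A=(A_1,\dots,A_n)$, $\sigma\colon k\to n$, $\mathbf A\sigma=(A_{\sigma1},\dots,A_{\sigma k})$; a morphism in a contravariant argument is read in $\mathbb C^{op}$. A transformation $\phi\colon F\to G$ ($F\colon\mathbb C^\alpha\to\mathbb C$, $G\colon\mathbb C^\beta\to\mathbb C$) of type $|\alpha|\xrightarrow{\sigma}n\xleftarrow{\tau}|\beta|$ is a family $\phi_{\mathbf A}\colon F(\mathbf A\sigma)\to G(\mathbf A\tau)$, $\mathbf A\in\mathrm{Ob}(\mathbb C)^n$. $\mathbf A[X,Y/i]\sigma$ is the tuple whose $j$-th entry is $X$ if $\sigma j=i,\alpha_j=-$, $Y$ if $\sigma j=i,\alpha_j=+$, $A_{\sigma j}$ (or $1_{A_{\sigma j}}$ for morphisms) otherwise; $\mathbf A[X/i]=\mathbf A[X,X/i]$. $\phi$ is dinatural in its $i$-th variable if for all $A_j$ ($j\ne i$) and $f\colon A\to B$: $G(\mathbf A[A,f/i]\tau)\circ\phi_{\mathbf A[A/i]}\circ F(\mathbf A[f,A/i]\sigma)=G(\mathbf A[f,B/i]\tau)\circ\phi_{\mathbf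 A[B/i]}\circ F(\mathbf A[B,f/i]\sigma)$. Horizontal composition: let $F\colon\mathbb C^\alpha\to\mathbb C$, $G\colon\mathbb C^\beta\to\mathbb C$, $H\colon\mathbb C^\gamma\to\mathbb C$, $K\colon\mathbb C^\delta\to\mathbb C$, $\phi\colon F\to G$ of type $|\alpha|\xrightarrow{\sigma}n\xleftarrow{\tau}|\beta|$ with variables $\mathbf A=(A_1,\dots,A_n)$, and $\psi\colon H\to K$ of type $|\gamma|\xrightarrow{\eta}m\xleftarrow{\theta}|\delta|$ with variables $\mathbf B=(B_1,\dots,B_m)$, dinatural in its $i$-th variable. The $i$-th horizontal composite $\phi\ast_i\psi$ is the transformation with variables $\mathbf B[\mathbf A/i]=(B_1,\dots,B_{i-1},A_1,\dots,A_n,B_{i+1},\dots,B_m)$ (so $A_k$ is its $(i-1+k)$-th variable). Its domain functor is obtained from $H$ by substituting, into each argument position $u$ with $\eta u=i$, the functor $F$ if $\gamma_u=+$ and $G^{op}$ if $\gamma_u=-$ (other positions unchanged); its codomain functor is obtained from $K$ by substituting, into each position $v$ with $\theta v=i$, $G$ if $\delta_v=+$ and $F^{op}$ if $\delta_v=-$. In its type, an argument coming from the $j$-th argument of a copy of $F$ is assigned variable $A_{\sigma j}$, one coming from the $j$-th argument of a copy of $G$ variable $A_{\tau j}$, and an unchanged position $u$ of $H$ (resp. $v$ of $K$) variable $B_{\eta u}$ (resp. $B_{\theta v}$). Its component at $\mathbf B[\mathbf A/i]$ is the morphism $H(\mathbf B[G(\mathbf A\tau),F(\mathbf A\sigma)/i]\eta)\to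 K(\mathbf B[F(\mathbf A\sigma),G(\mathbf A\tau)/i]\theta)$ given by $K(\mathbf B[F(\mathbf A\sigma),\phi_{\mathbf A}/i]\theta)\circ\psi_{\mathbf B[F(\mathbf A\sigma)/i]}\circ H(\mathbf B[\phi_{\mathbf A},F(\mathbf A\sigma)/i]\eta)$, equal to $K(\mathbf B[\phi_{\mathbf A},G(\mathbf A\tau)/i]\theta)\circ\psi_{\mathbf B[G(\mathbf A\tau)/i]}\circ H(\mathbf B[G(\mathbf A\tau),\phi_{\mathbf A}/i]\eta)$ by dinaturality of $\psi$. Dinaturality of $\phi\ast_i\psi$ in a variable is in the sense above applied to this transformation. *)

theory Defs
  imports Main
begin

text \<open>Indices are 0-based: the paper's variable k corresponds to index k-1.
  A variance list has True for covariant (+) and False for contravariant (-).\<close>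

record ('o,'m) cat =
  Obj :: "'o set"
  Arr :: "'m set"
  Dom :: "'m \<Rightarrow> 'o"
  Cod :: "'m \<Rightarrow> 'o"
  Idm :: "'o \<Rightarrow> 'm"
  Cmp :: "'m \<Rightarrow> 'm \<Rightarrow> 'm"  \<comment> \<open>Cmp C g f = g after f\<close>

definition category :: "('o,'m) cat \<Rightarrow> bool" where
  "category C \<longleftrightarrow>
    (\<forall>a\<in>Obj C. Idm C a \<in> Arr C \<and> Dom C (Idm C a) = a \<and> Cod C (Idm C a) = a) \<and>
    (\<forall>f\<in>Arr C. Dom C f \<in> Obj C \<and> Cod C f \<in> Obj C) \<and>
    (\<forall>f\<in>Arr C. \<forall>g\<in>Arr C. Cod C f = Dom C g \<longrightarrow>
        Cmp C g f \<in> Arr C \<and> Dom C (Cmp C g f) = Dom C f \<and> Cod C (Cmp C g f) = Cod C g) \<and>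
    (\<forall>f\<in>Arr C. Cmp C f (Idm C (Dom C f)) = f \<and> Cmp C (Idm C (Cod C f)) f = f) \<and>
    (\<forall>f\<in>Arr C. \<forall>g\<in>Arr C. \<forall>h\<in>Arr C. Cod C f = Dom C g \<and> Cod C g = Dom C h \<longrightarrow>
        Cmp C h (Cmp C g f) = Cmp C (Cmp C h g) f)"

text \<open>A functor C^alpha -> C, acting on lists of objects / morphisms.\<close>
record ('o,'m) mfunctor =
  fob :: "'o list \<Rightarrow> 'o"
  fmor :: "'m list \<Rightarrow> 'm"

definition vdom :: "('o,'m) cat \<Rightarrow> bool list \<Rightarrow> 'm list \<Rightarrow> 'o list" where
  "vdom C \<alpha> fs = map (\<lambda>k. if \<alpha>!k then Dom C (fs!k) else Cod C (fs!k)) [0..<length \<alpha>]"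

definition vcod :: "('o,'m) cat \<Rightarrow> bool list \<Rightarrow> 'm list \<Rightarrow> 'o list" where
  "vcod C \<alpha> fs = map (\<lambda>k. if \<alpha>!k then Cod C (fs!k) else Dom C (fs!k)) [0..<length \<alpha>]"

text \<open>Composition gs after fs in C^alpha (contravariant components composed in C^op).\<close>
definition vcomp :: "('o,'m) cat \<Rightarrow> bool list \<Rightarrow> 'm list \<Rightarrow> 'm list \<Rightarrow> 'm list" where
  "vcomp C \<alpha> gs fs = map (\<lambda>k. if \<alpha>!k then Cmp C (gs!k) (fs!k) else Cmp C (fs!k) (gs!k)) [0..<length \<alpha>]"

definition is_functor :: "('o,'m) cat \<Rightarrow> bool list \<Rightarrow> ('o,'m) mfunctor \<Rightarrow> bool" where
  "is_functor C \<alpha> F \<longleftrightarrow>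
    (\<forall>As. length As = length \<alpha> \<and> set As \<subseteq> Obj C \<longrightarrow>
        fob F As \<in> Obj C \<and> fmor F (map (Idm C) As) = Idm C (fob F As)) \<and>
    (\<forall>fs. length fs = length \<alpha> \<and> set fs \<subseteq> Arr C \<longrightarrow>
        fmor F fs \<in> Arr C \<and> Dom C (fmor F fs) = fob F (vdom C \<alpha> fs)
        \<and> Cod C (fmor F fs) = fob F (vcod C \<alpha> fs)) \<and>
    (\<forall>fs gs. length fs = length \<alpha> \<and> length gs = length \<alpha> \<and> set fs \<subseteq> Arr C \<and> set gs \<subseteq> Arr C
        \<and> vcod C \<alpha> fs = vdom C \<alpha> gs \<longrightarrow>
        fmor F (vcomp C \<alpha> gs fs) = Cmp C (fmor F gs) (fmor F fs))"

definition tup :: "'a list \<Rightarrow> (nat \<Rightarrow> nat) \<Rightarrow> nat \<Rightarrow> 'a list" where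
  "tup A \<sigma> k = map (\<lambda>j. A ! (\<sigma> j)) [0..<k]"

definition is_transformation ::
  "('o,'m) cat \<Rightarrow> bool list \<Rightarrow> bool list \<Rightarrow> (nat \<Rightarrow> nat) \<Rightarrow> (nat \<Rightarrow> nat) \<Rightarrow> nat
   \<Rightarrow> ('o,'m) mfunctor \<Rightarrow> ('o,'m) mfunctor \<Rightarrow> ('o list \<Rightarrow> 'm) \<Rightarrow> bool" where
  "is_transformation C \<alpha> \<beta> \<sigma> \<tau> n F G \<phi> \<longleftrightarrow>
    (\<forall>j<length \<alpha>. \<sigma> j < n) \<and> (\<forall>j<length \<beta>. \<tau> j < n) \<and>
    (\<forall>A. length A = n \<and> set A \<subseteq> Obj C \<longrightarrow>
        \<phi> A \<in> Arr C \<and> Dom C (\<phi> A) = fob F (tup A \<sigma> (length \<alpha>))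
        \<and> Cod C (\<phi> A) = fob G (tup A \<tau> (length \<beta>)))"

text \<open>A[X,Y/i]sigma: X in contravariant slots mapped to i, Y in covariant ones, a(sigma j) elsewhere.\<close>
definition subst :: "bool list \<Rightarrow> (nat \<Rightarrow> nat) \<Rightarrow> (nat \<Rightarrow> 'a) \<Rightarrow> nat \<Rightarrow> 'a \<Rightarrow> 'a \<Rightarrow> 'a list" where
  "subst \<alpha> \<sigma> a i X Y = map (\<lambda>j. if \<sigma> j = i then (if \<alpha>!j then Y else X) else a (\<sigma> j)) [0..<length \<alpha>]"

definition dinatural ::
  "('o,'m) cat \<Rightarrow> bool list \<Rightarrow> bool list \<Rightarrow> (nat \<Rightarrow> nat) \<Rightarrow> (nat \<Rightarrow> nat) \<Rightarrow> nat
   \<Rightarrow> ('o,'m) mfunctor \<Rightarrow> ('o,'m) mfunctor \<Rightarrow> ('o list \<Rightarrow> 'm) \<Rightarrow> nat \<Rightarrow> bool" where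
  "dinatural C \<alpha> \<beta> \<sigma> \<tau> n F G \<phi> i \<longleftrightarrow>
    (\<forall>A f. length A = n \<and> set A \<subseteq> Obj C \<and> f \<in> Arr C \<longrightarrow>
      (let a = Dom C f; b = Cod C f; e = (\<lambda>k. Idm C (A!k)) in
        Cmp C (fmor G (subst \<beta> \<tau> e i (Idm C a) f))
          (Cmp C (\<phi> (A[i := a])) (fmor F (subst \<alpha> \<sigma> e i f (Idm C a))))
        = Cmp C (fmor G (subst \<beta> \<tau> e i f (Idm C b)))
          (Cmp C (\<phi> (A[i := b])) (fmor F (subst \<alpha> \<sigma> e i (Idm C b) f)))))"

text \<open>New index of the outer variable B_l (l \<noteq> i) in B[A/i], with n inner variables.\<close>
definition reix :: "nat \<Rightarrow> nat \<Rightarrow> nat \<Rightarrow> nat" where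
  "reix i n l = (if l < i then l else l - 1 + n)"

text \<open>Substituting functor P (variances aP) into covariant slots u with eta u = i of
  an outer functor with variances gamma, and Q^op (variances aQ) into the contravariant ones.\<close>
definition seglen :: "bool list \<Rightarrow> (nat \<Rightarrow> nat) \<Rightarrow> nat \<Rightarrow> bool list \<Rightarrow> bool list \<Rightarrow> nat \<Rightarrow> nat" where
  "seglen \<gamma> \<eta> i aP aQ u = (if \<eta> u = i then (if \<gamma>!u then length aP else length aQ) else 1)"

definition segoff :: "bool list \<Rightarrow> (nat \<Rightarrow> nat) \<Rightarrow> nat \<Rightarrow> bool list \<Rightarrow> bool list \<Rightarrow> nat \<Rightarrow> nat" where
  "segoff \<gamma> \<eta> i aP aQ u = sum_list (map (seglen \<gamma> \<eta> i aP aQ) [0..<u])"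

definition seg :: "bool list \<Rightarrow> (nat \<Rightarrow> nat) \<Rightarrow> nat \<Rightarrow> bool list \<Rightarrow> bool list \<Rightarrow> 'a list \<Rightarrow> nat \<Rightarrow> 'a list" where
  "seg \<gamma> \<eta> i aP aQ xs u = take (seglen \<gamma> \<eta> i aP aQ u) (drop (segoff \<gamma> \<eta> i aP aQ u) xs)"

definition sub_var :: "bool list \<Rightarrow> (nat \<Rightarrow> nat) \<Rightarrow> nat \<Rightarrow> bool list \<Rightarrow> bool list \<Rightarrow> bool list" where
  "sub_var \<gamma> \<eta> i aP aQ = concat (map (\<lambda>u. if \<eta> u = i then (if \<gamma>!u then aP else map Not aQ)
      else [\<gamma>!u]) [0..<length \<gamma>])"

definition sub_type :: "bool list \<Rightarrow> (nat \<Rightarrow> nat) \<Rightarrow> nat \<Rightarrow> nat \<Rightarrow> bool list \<Rightarrow> (nat \<Rightarrow> nat)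
    \<Rightarrow> bool list \<Rightarrow> (nat \<Rightarrow> nat) \<Rightarrow> nat list" where
  "sub_type \<gamma> \<eta> i n aP sP aQ sQ = concat (map (\<lambda>u. if \<eta> u = i then
        (if \<gamma>!u then map (\<lambda>j. i + sP j) [0..<length aP] else map (\<lambda>j. i + sQ j) [0..<length aQ])
      else [reix i n (\<eta> u)]) [0..<length \<gamma>])"

definition sub_functor :: "bool list \<Rightarrow> (nat \<Rightarrow> nat) \<Rightarrow> nat \<Rightarrow> bool list \<Rightarrow> bool list
    \<Rightarrow> ('o,'m) mfunctor \<Rightarrow> ('o,'m) mfunctor \<Rightarrow> ('o,'m) mfunctor \<Rightarrow> ('o,'m) mfunctor" where
  "sub_functor \<gamma> \<eta> i aP aQ H P Q =
    \<lparr> fob = (\<lambda>xs. fob H (map (\<lambda>u. let s = seg \<gamma> \<eta> i aP aQ xs u in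
          if \<eta> u = i then (if \<gamma>!u then fob P s else fob Q s) else hd s) [0..<length \<gamma>])),
      fmor = (\<lambda>xs. fmor H (map (\<lambda>u. let s = seg \<gamma> \<eta> i aP aQ xs u in
          if \<eta> u = i then (if \<gamma>!u then fmor P s else fmor Q s) else hd s) [0..<length \<gamma>])) \<rparr>"

text \<open>Components of phi *_i psi at V = B[A/i] (V has length m - 1 + n).\<close>
definition hcomp :: "('o,'m) cat \<Rightarrow> bool list \<Rightarrow> (nat \<Rightarrow> nat) \<Rightarrow> ('o,'m) mfunctor \<Rightarrow> ('o list \<Rightarrow> 'm) \<Rightarrow> nat
    \<Rightarrow> bool list \<Rightarrow> (nat \<Rightarrow> nat) \<Rightarrow> ('o,'m) mfunctor \<Rightarrow> bool list \<Rightarrow> (nat \<Rightarrow> nat) \<Rightarrow> ('o,'m) mfunctor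
    \<Rightarrow> ('o list \<Rightarrow> 'm) \<Rightarrow> nat \<Rightarrow> nat \<Rightarrow> 'o list \<Rightarrow> 'm" where
  "hcomp C \<alpha> \<sigma> F \<phi> n \<gamma> \<eta> H \<delta> \<theta> K \<psi> m i V =
    (let A = take n (drop i V);
         FA = fob F (tup A \<sigma> (length \<alpha>));
         B = map (\<lambda>l. if l = i then FA else if l < i then V!l else V!(l - 1 + n)) [0..<m];
         e = (\<lambda>l. Idm C (B!l))
     in Cmp C (fmor K (subst \<delta> \<theta> e i (Idm C FA) (\<phi> A)))
          (Cmp C (\<psi> B) (fmor H (subst \<gamma> \<eta> e i (\<phi> A) (Idm C FA)))))"

end

theory Submission
  imports Defs
begin

lemma psum_le:
  assumes "u < L"
  shows "sum_list (map len [0..<u]) + (len u::nat) \<le> sum_list (map len [0..<L])"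
  using assms
proof (induction L)
  case 0 then show ?case by simp
next
  case (Suc L)
  show ?case
  proof (cases "u = L")
    case True then show ?thesis by simp
  next
    case False with Suc show ?thesis by simp
  qed
qed

lemma concat_len:
  assumes "\<forall>u<L. length (g u) = len u"
  shows "length (concat (map g [0..<L])) = sum_list (map len [0..<L])"
  using assms by (induction L) auto

lemma concat_nth_block:
  assumes "\<forall>u<L. length (g u) = len u" and "u < L" and "k < len u"
  shows "concat (map g [0..<L]) ! (sum_list (map len [0..<u]) + k) = g u ! k"
  using assms
proof (induction L)
  case 0 then show ?case by simp
next
  case (Suc L)
  have cl: "length (concat (map g [0..<L])) = sum_list (map len [0..<L])"
    using Suc.prems(1) by (intro concat_len) auto
  show ?case
  proof (cases "u = L")
    case True then show ?thesis using cl by (simp add: nth_append)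
  next
    case False
    hence "u < L" using Suc.prems by simp
    hence "sum_list (map len [0..<u]) + k < sum_list (map len [0..<L])"
      using psum_le[of u L len] Suc.prems(3) by simp
    then show ?thesis using Suc.IH Suc.prems \<open>u < L\<close> cl by (simp add: nth_append)
  qed
qed

lemma seg_eq:
  assumes "length xs = sum_list (map (seglen \<gamma> \<eta> i aP aQ) [0..<length \<gamma>])" and "u < length \<gamma>"
  shows "seg \<gamma> \<eta> i aP aQ xs u = map (\<lambda>k. xs ! (segoff \<gamma> \<eta> i aP aQ u + k)) [0..<seglen \<gamma> \<eta> i aP aQ u]"
proof -
  have le: "segoff \<gamma> \<eta> i aP aQ u + seglen \<gamma> \<eta> i aP aQ u \<le> length xs"
    using psum_le[OF assms(2), of "seglen \<gamma> \<eta> i aP aQ"] assms(1) unfolding segoff_def by simp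
  show ?thesis unfolding seg_def
    by (rule nth_equalityI) (use le in auto)
qed

definition hv :: "bool list \<Rightarrow> (nat\<Rightarrow>nat) \<Rightarrow> nat \<Rightarrow> nat \<Rightarrow> (nat\<Rightarrow>'m) \<Rightarrow> 'm\<Rightarrow>'m\<Rightarrow>'m\<Rightarrow>'m \<Rightarrow> nat \<Rightarrow> 'm" where
  "hv \<gamma> \<eta> i j e iX iY jX jY u = (if \<eta> u = i then (if \<gamma>!u then iY else iX)
     else if \<eta> u = j then (if \<gamma>!u then jY else jX) else e (\<eta> u))"

lemma reix_inj: "l \<noteq> i \<Longrightarrow> j \<noteq> i \<Longrightarrow> reix i n l = reix i n j \<longleftrightarrow> l = j"
  unfolding reix_def by auto

lemma sub_functor_subst:
  assumes FP: "is_functor C aP P" and FQ: "is_functor C aQ Q"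
    and sP: "\<forall>k<length aP. sP k < n" and sQ: "\<forall>k<length aQ. sQ k < n"
    and eta: "\<forall>u<length \<gamma>. \<eta> u < m" and "i < m" "j < m" "j \<noteq> i"
    and lV: "length V = m - 1 + n" and oV: "set V \<subseteq> Obj C"
  shows "fmor (sub_functor \<gamma> \<eta> i aP aQ H P Q)
      (subst (sub_var \<gamma> \<eta> i aP aQ) ((!) (sub_type \<gamma> \<eta> i n aP sP aQ sQ)) (\<lambda>k. Idm C (V!k)) (reix i n j) X Y)
    = fmor H (map (hv \<gamma> \<eta> i j (\<lambda>l. Idm C (V ! reix i n l))
        (Idm C (fob Q (tup (take n (drop i V)) sQ (length aQ))))
        (Idm C (fob P (tup (take n (drop i V)) sP (length aP)))) X Y) [0..<length \<gamma>])"
proof -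
  define len where "len = seglen \<gamma> \<eta> i aP aQ"
  define gv where "gv = (\<lambda>u. if \<eta> u = i then (if \<gamma>!u then aP else map Not aQ) else [\<gamma>!u])"
  define gt where "gt = (\<lambda>u. if \<eta> u = i then
        (if \<gamma>!u then map (\<lambda>j. i + sP j) [0..<length aP] else map (\<lambda>j. i + sQ j) [0..<length aQ])
      else [reix i n (\<eta> u)])"
  define sv where "sv = sub_var \<gamma> \<eta> i aP aQ"
  define ty where "ty = sub_type \<gamma> \<eta> i n aP sP aQ sQ"
  define xs where "xs = subst sv ((!) ty) (\<lambda>k. Idm C (V!k)) (reix i n j) X Y"
  define A where "A = take n (drop i V)"
  have sv_def': "sv = concat (map gv [0..<length \<gamma>])" unfolding sv_def sub_var_def gv_def by simp
  have ty_def': "ty = concat (map gt [0..<length \<gamma>])" unfolding ty_def sub_type_def gt_def by simp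
  have lgv: "\<forall>u<length \<gamma>. length (gv u) = len u" unfolding gv_def len_def seglen_def by auto
  have lgt: "\<forall>u<length \<gamma>. length (gt u) = len u" unfolding gt_def len_def seglen_def by auto
  have lsv: "length sv = sum_list (map len [0..<length \<gamma>])"
    unfolding sv_def' by (rule concat_len[OF lgv])
  have lxs: "length xs = sum_list (map len [0..<length \<gamma>])"
    unfolding xs_def subst_def using lsv by simp
  have off: "segoff \<gamma> \<eta> i aP aQ u = sum_list (map len [0..<u])" for u
    unfolding segoff_def len_def ..
  have xsn: "xs ! (segoff \<gamma> \<eta> i aP aQ u + k) =
      (if gt u ! k = reix i n j then (if gv u ! k then Y else X) else Idm C (V ! (gt u ! k)))"
    if "u < length \<gamma>" "k < len u" for u k
  proof -
    have p: "segoff \<gamma> \<eta> i aP aQ u + k < length sv"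
      using psum_le[OF that(1), of len] that(2) lsv off by simp
    have "sv ! (segoff \<gamma> \<eta> i aP aQ u + k) = gv u ! k"
      unfolding sv_def' off by (rule concat_nth_block[OF lgv that])
    moreover have "ty ! (segoff \<gamma> \<eta> i aP aQ u + k) = gt u ! k"
      unfolding ty_def' off by (rule concat_nth_block[OF lgt that])
    ultimately show ?thesis using p unfolding xs_def subst_def by simp
  qed
  have iV: "i + n \<le> length V" using lV \<open>i < m\<close> by simp
  have Anth: "A ! k = V ! (i + k)" if "k < n" for k
    unfolding A_def using that iV by simp
  have Aobj: "set A \<subseteq> Obj C" unfolding A_def using oV
    by (meson set_drop_subset set_take_subset subset_trans)
  have jne: "i + k \<noteq> reix i n j" if "k < n" for k
    unfolding reix_def using that \<open>j \<noteq> i\<close> by auto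
  show ?thesis
    unfolding sub_functor_def xs_def[symmetric, unfolded sv_def ty_def] mfunctor.simps A_def[symmetric]
  proof (intro arg_cong[where f="fmor H"] map_cong refl)
    fix u assume "u \<in> set [0..<length \<gamma>]"
    hence u: "u < length \<gamma>" by simp
    have sg: "seg \<gamma> \<eta> i aP aQ xs u = map (\<lambda>k. xs ! (segoff \<gamma> \<eta> i aP aQ u + k)) [0..<len u]"
      unfolding len_def by (rule seg_eq[OF lxs[unfolded len_def] u])
    show "(let s = seg \<gamma> \<eta> i aP aQ xs u in if \<eta> u = i then if \<gamma> ! u then fmor P s else fmor Q s else hd s) =
      hv \<gamma> \<eta> i j (\<lambda>l. Idm C (V ! reix i n l)) (Idm C (fob Q (tup A sQ (length aQ))))
        (Idm C (fob P (tup A sP (length aP)))) X Y u"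
    proof (cases "\<eta> u = i")
      case True
      show ?thesis
      proof (cases "\<gamma>!u")
        case True
        have "seg \<gamma> \<eta> i aP aQ xs u = map (Idm C) (tup A sP (length aP))"
          unfolding sg tup_def using \<open>\<eta> u = i\<close> True sP jne[of "sP _"]
          by (auto simp: len_def seglen_def xsn[OF u] gt_def Anth)
        moreover have "set (tup A sP (length aP)) \<subseteq> Obj C" "length (tup A sP (length aP)) = length aP"
          using sP iV by (force simp: tup_def A_def intro!: subsetD[OF oV] nth_mem)+
        ultimately show ?thesis using FP \<open>\<eta> u = i\<close> True
          unfolding is_functor_def hv_def Let_def by auto
      next
        case False
        have "seg \<gamma> \<eta> i aP aQ xs u = map (Idm C) (tup A sQ (length aQ))"
          unfolding sg tup_def using \<open>\<eta> u = i\<close> False sQ jne[of "sQ _"]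
          by (auto simp: len_def seglen_def xsn[OF u] gt_def Anth)
        moreover have "set (tup A sQ (length aQ)) \<subseteq> Obj C" "length (tup A sQ (length aQ)) = length aQ"
          using sQ iV by (force simp: tup_def A_def intro!: subsetD[OF oV] nth_mem)+
        ultimately show ?thesis using FQ \<open>\<eta> u = i\<close> False
          unfolding is_functor_def hv_def Let_def by auto
      qed
    next
      case False
      have "len u = 1" using False unfolding len_def seglen_def by simp
      hence "hd (seg \<gamma> \<eta> i aP aQ xs u) = xs ! (segoff \<gamma> \<eta> i aP aQ u + 0)" unfolding sg by simp
      also have "\<dots> = (if reix i n (\<eta> u) = reix i n j then (if \<gamma>!u then Y else X) else Idm C (V ! reix i n (\<eta> u)))"
        using xsn[OF u, of 0] \<open>len u = 1\<close> False unfolding gt_def gv_def by simp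
      finally show ?thesis using False reix_inj[OF False \<open>j \<noteq> i\<close>] unfolding hv_def Let_def by auto
    qed
  qed
qed

lemma cat_id: "category C \<Longrightarrow> a \<in> Obj C \<Longrightarrow> Idm C a \<in> Arr C \<and> Dom C (Idm C a) = a \<and> Cod C (Idm C a) = a"
  unfolding category_def by blast
lemma cat_dc: "category C \<Longrightarrow> f \<in> Arr C \<Longrightarrow> Dom C f \<in> Obj C \<and> Cod C f \<in> Obj C"
  unfolding category_def by blast
lemma cat_cmp: "category C \<Longrightarrow> f \<in> Arr C \<Longrightarrow> g \<in> Arr C \<Longrightarrow> Cod C f = Dom C g \<Longrightarrow>
    Cmp C g f \<in> Arr C \<and> Dom C (Cmp C g f) = Dom C f \<and> Cod C (Cmp C g f) = Cod C g"
  unfolding category_def by blast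
lemma cat_idl: "category C \<Longrightarrow> f \<in> Arr C \<Longrightarrow> Cod C f = x \<Longrightarrow> Cmp C (Idm C x) f = f"
  unfolding category_def by blast
lemma cat_idr: "category C \<Longrightarrow> f \<in> Arr C \<Longrightarrow> Dom C f = x \<Longrightarrow> Cmp C f (Idm C x) = f"
  unfolding category_def by blast
lemma cat_assoc: "category C \<Longrightarrow> f \<in> Arr C \<Longrightarrow> g \<in> Arr C \<Longrightarrow> h \<in> Arr C \<Longrightarrow>
   Cod C f = Dom C g \<Longrightarrow> Cod C g = Dom C h \<Longrightarrow> Cmp C h (Cmp C g f) = Cmp C (Cmp C h g) f"
  unfolding category_def by blast

lemma fun_map_arr:
  assumes "is_functor C \<gamma> H" and "\<forall>u<length \<gamma>. f u \<in> Arr C"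
  shows "fmor H (map f [0..<length \<gamma>]) \<in> Arr C
    \<and> Dom C (fmor H (map f [0..<length \<gamma>])) = fob H (map (\<lambda>u. if \<gamma>!u then Dom C (f u) else Cod C (f u)) [0..<length \<gamma>])
    \<and> Cod C (fmor H (map f [0..<length \<gamma>])) = fob H (map (\<lambda>u. if \<gamma>!u then Cod C (f u) else Dom C (f u)) [0..<length \<gamma>])"
proof -
  have "length (map f [0..<length \<gamma>]) = length \<gamma> \<and> set (map f [0..<length \<gamma>]) \<subseteq> Arr C"
    using assms(2) by auto
  moreover have "vdom C \<gamma> (map f [0..<length \<gamma>]) = map (\<lambda>u. if \<gamma>!u then Dom C (f u) else Cod C (f u)) [0..<length \<gamma>]"
    "vcod C \<gamma> (map f [0..<length \<gamma>]) = map (\<lambda>u. if \<gamma>!u then Cod C (f u) else Dom C (f u)) [0..<length \<gamma>]"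
    unfolding vdom_def vcod_def by (auto intro!: map_cong)
  ultimately show ?thesis using assms(1) unfolding is_functor_def by (simp only:)
qed

lemma fun_map_comp:
  assumes "is_functor C \<gamma> H" and "\<forall>u<length \<gamma>. f u \<in> Arr C \<and> g u \<in> Arr C \<and>
     (if \<gamma>!u then Cod C (f u) = Dom C (g u) else Cod C (g u) = Dom C (f u))"
  shows "Cmp C (fmor H (map g [0..<length \<gamma>])) (fmor H (map f [0..<length \<gamma>]))
     = fmor H (map (\<lambda>u. if \<gamma>!u then Cmp C (g u) (f u) else Cmp C (f u) (g u)) [0..<length \<gamma>])"
proof -
  have "vcod C \<gamma> (map f [0..<length \<gamma>]) = vdom C \<gamma> (map g [0..<length \<gamma>])"
    unfolding vdom_def vcod_def using assms(2) by (auto intro!: map_cong)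
  moreover have "vcomp C \<gamma> (map g [0..<length \<gamma>]) (map f [0..<length \<gamma>]) =
     map (\<lambda>u. if \<gamma>!u then Cmp C (g u) (f u) else Cmp C (f u) (g u)) [0..<length \<gamma>]"
    unfolding vcomp_def by (auto intro!: map_cong)
  moreover have F3: "\<forall>fs gs. length fs = length \<gamma> \<and> length gs = length \<gamma> \<and> set fs \<subseteq> Arr C \<and> set gs \<subseteq> Arr C
        \<and> vcod C \<gamma> fs = vdom C \<gamma> gs \<longrightarrow>
        fmor H (vcomp C \<gamma> gs fs) = Cmp C (fmor H gs) (fmor H fs)"
    using assms(1) unfolding is_functor_def by (elim conjE)
  moreover have "set (map f [0..<length \<gamma>]) \<subseteq> Arr C" "set (map g [0..<length \<gamma>]) \<subseteq> Arr C"
    using assms(2) by auto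
  ultimately have "fmor H (vcomp C \<gamma> (map g [0..<length \<gamma>]) (map f [0..<length \<gamma>])) =
       Cmp C (fmor H (map g [0..<length \<gamma>])) (fmor H (map f [0..<length \<gamma>]))"
    by (intro F3[rule_format]) auto
  with \<open>vcomp C \<gamma> _ _ = _\<close> show ?thesis by simp
qed

lemma hmap_arr:
  assumes "is_functor C \<gamma> H" and "i \<noteq> j"
    and "\<forall>u<length \<gamma>. \<eta> u \<noteq> i \<longrightarrow> \<eta> u \<noteq> j \<longrightarrow> e (\<eta> u) \<in> Arr C \<and> Dom C (e (\<eta> u)) = eo (\<eta> u) \<and> Cod C (e (\<eta> u)) = eo (\<eta> u)"
    and "X \<in> Arr C" "Y \<in> Arr C" "jX \<in> Arr C" "jY \<in> Arr C"
  shows "fmor H (map (hv \<gamma> \<eta> i j e X Y jX jY) [0..<length \<gamma>]) \<in> Arr C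
    \<and> Dom C (fmor H (map (hv \<gamma> \<eta> i j e X Y jX jY) [0..<length \<gamma>])) =
        fob H (map (hv \<gamma> \<eta> i j eo (Cod C X) (Dom C Y) (Cod C jX) (Dom C jY)) [0..<length \<gamma>])
    \<and> Cod C (fmor H (map (hv \<gamma> \<eta> i j e X Y jX jY) [0..<length \<gamma>])) =
        fob H (map (hv \<gamma> \<eta> i j eo (Dom C X) (Cod C Y) (Dom C jX) (Cod C jY)) [0..<length \<gamma>])"
proof -
  have "\<forall>u<length \<gamma>. hv \<gamma> \<eta> i j e X Y jX jY u \<in> Arr C"
    using assms unfolding hv_def by auto
  note r = fun_map_arr[OF assms(1) this]
  have eqd: "map (\<lambda>u. if \<gamma>!u then Dom C (hv \<gamma> \<eta> i j e X Y jX jY u) else Cod C (hv \<gamma> \<eta> i j e X Y jX jY u)) [0..<length \<gamma>]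
     = map (hv \<gamma> \<eta> i j eo (Cod C X) (Dom C Y) (Cod C jX) (Dom C jY)) [0..<length \<gamma>]"
    by (rule map_cong[OF refl]) (use assms(2,3) in \<open>auto simp: hv_def\<close>)
  have eqc: "map (\<lambda>u. if \<gamma>!u then Cod C (hv \<gamma> \<eta> i j e X Y jX jY u) else Dom C (hv \<gamma> \<eta> i j e X Y jX jY u)) [0..<length \<gamma>]
     = map (hv \<gamma> \<eta> i j eo (Dom C X) (Cod C Y) (Dom C jX) (Cod C jY)) [0..<length \<gamma>]"
    by (rule map_cong[OF refl]) (use assms(2,3) in \<open>auto simp: hv_def\<close>)
  show ?thesis using r unfolding eqd eqc by simp
qed

lemma hmap_comp:
  assumes "is_functor C \<gamma> H" and "i \<noteq> j"
    and "\<forall>u<length \<gamma>. \<eta> u \<noteq> i \<longrightarrow> \<eta> u \<noteq> j \<longrightarrow> e (\<eta> u) \<in> Arr C \<and> Dom C (e (\<eta> u)) = Cod C (e (\<eta> u))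
        \<and> Cmp C (e (\<eta> u)) (e (\<eta> u)) = e (\<eta> u)"
    and "fX \<in> Arr C" "fY \<in> Arr C" "fjX \<in> Arr C" "fjY \<in> Arr C"
    and "gX \<in> Arr C" "gY \<in> Arr C" "gjX \<in> Arr C" "gjY \<in> Arr C"
    and "Cod C fY = Dom C gY" "Cod C gX = Dom C fX" "Cod C fjY = Dom C gjY" "Cod C gjX = Dom C fjX"
  shows "Cmp C (fmor H (map (hv \<gamma> \<eta> i j e gX gY gjX gjY) [0..<length \<gamma>]))
               (fmor H (map (hv \<gamma> \<eta> i j e fX fY fjX fjY) [0..<length \<gamma>]))
    = fmor H (map (hv \<gamma> \<eta> i j e (Cmp C fX gX) (Cmp C gY fY) (Cmp C fjX gjX) (Cmp C gjY fjY)) [0..<length \<gamma>])"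
proof -
  have "\<forall>u<length \<gamma>. hv \<gamma> \<eta> i j e fX fY fjX fjY u \<in> Arr C \<and> hv \<gamma> \<eta> i j e gX gY gjX gjY u \<in> Arr C \<and>
     (if \<gamma>!u then Cod C (hv \<gamma> \<eta> i j e fX fY fjX fjY u) = Dom C (hv \<gamma> \<eta> i j e gX gY gjX gjY u)
      else Cod C (hv \<gamma> \<eta> i j e gX gY gjX gjY u) = Dom C (hv \<gamma> \<eta> i j e fX fY fjX fjY u))"
    using assms unfolding hv_def by auto
  note r = fun_map_comp[OF assms(1) this]
  have eq: "map (\<lambda>u. if \<gamma>!u then Cmp C (hv \<gamma> \<eta> i j e gX gY gjX gjY u) (hv \<gamma> \<eta> i j e fX fY fjX fjY u)
      else Cmp C (hv \<gamma> \<eta> i j e fX fY fjX fjY u) (hv \<gamma> \<eta> i j e gX gY gjX gjY u)) [0..<length \<gamma>]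
     = map (hv \<gamma> \<eta> i j e (Cmp C fX gX) (Cmp C gY fY) (Cmp C fjX gjX) (Cmp C gjY fjY)) [0..<length \<gamma>]"
    by (rule map_cong[OF refl]) (use assms(2,3) in \<open>auto simp: hv_def\<close>)
  show ?thesis unfolding r eq ..
qed

lemma subst_i_hv:
  assumes "\<forall>u<length \<gamma>. \<eta> u \<noteq> i \<longrightarrow> \<eta> u \<noteq> j \<longrightarrow> E (\<eta> u) = e (\<eta> u)" "E j = Z" "j \<noteq> i"
  shows "subst \<gamma> \<eta> E i X Y = map (hv \<gamma> \<eta> i j e X Y Z Z) [0..<length \<gamma>]"
  using assms unfolding subst_def hv_def by (auto intro!: map_cong)

lemma subst_j_hv:
  assumes "\<forall>u<length \<gamma>. \<eta> u \<noteq> i \<longrightarrow> \<eta> u \<noteq> j \<longrightarrow> E (\<eta> u) = e (\<eta> u)" "E i = Z" "j \<noteq> i"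
  shows "subst \<gamma> \<eta> E j X Y = map (hv \<gamma> \<eta> i j e Z Z X Y) [0..<length \<gamma>]"
  using assms unfolding subst_def hv_def by (auto intro!: map_cong)

lemma regroup:
  assumes "category C" and ar: "k' \<in> Arr C" "ki \<in> Arr C" "ps \<in> Arr C" "hi \<in> Arr C" "h' \<in> Arr C"
     "k0 \<in> Arr C" "k1 \<in> Arr C" "h1 \<in> Arr C" "h0 \<in> Arr C"
   and c: "Cod C h' = Dom C hi" "Cod C hi = Dom C ps" "Cod C ps = Dom C ki" "Cod C ki = Dom C k'"
     "Cod C h0 = Dom C h1" "Cod C h1 = Dom C ps" "Cod C k1 = Dom C k0" "Dom C k1 = Cod C ps"
   and e1: "Cmp C hi h' = Cmp C h1 h0" and e2: "Cmp C k' ki = Cmp C k0 k1"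
  shows "Cmp C k' (Cmp C (Cmp C ki (Cmp C ps hi)) h') = Cmp C k0 (Cmp C (Cmp C k1 (Cmp C ps h1)) h0)"
proof -
  note A = cat_assoc[OF assms(1)] and M = cat_cmp[OF assms(1)]
  have m1: "Cmp C ps hi \<in> Arr C" "Dom C (Cmp C ps hi) = Dom C hi" "Cod C (Cmp C ps hi) = Cod C ps"
    using M[OF ar(4) ar(3) c(2)] by auto
  have m2: "Cmp C hi h' \<in> Arr C" "Dom C (Cmp C hi h') = Dom C h'" "Cod C (Cmp C hi h') = Cod C hi"
    using M[OF ar(5) ar(4) c(1)] by auto
  have m3: "Cmp C ps h1 \<in> Arr C" "Dom C (Cmp C ps h1) = Dom C h1" "Cod C (Cmp C ps h1) = Cod C ps"
    using M[OF ar(8) ar(3) c(6)] by auto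
  have m4: "Cmp C h1 h0 \<in> Arr C" "Dom C (Cmp C h1 h0) = Dom C h0" "Cod C (Cmp C h1 h0) = Cod C h1"
    using M[OF ar(9) ar(8) c(5)] by auto
  have m5: "Cmp C ki (Cmp C ps hi) \<in> Arr C" "Dom C (Cmp C ki (Cmp C ps hi)) = Dom C hi"
    using M[OF m1(1) ar(2)] m1 c by auto
  have m6: "Cmp C k1 (Cmp C ps h1) \<in> Arr C" "Dom C (Cmp C k1 (Cmp C ps h1)) = Dom C h1" "Cod C (Cmp C k1 (Cmp C ps h1)) = Cod C k1"
    using M[OF m3(1) ar(7)] m3 c by auto
  have m7: "Cmp C (Cmp C ps h1) h0 \<in> Arr C" "Cod C (Cmp C (Cmp C ps h1) h0) = Cod C ps"
    using M[OF ar(9) m3(1)] m3 c by auto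
  have "Cmp C (Cmp C ki (Cmp C ps hi)) h' = Cmp C ki (Cmp C (Cmp C ps hi) h')"
    using A[OF ar(5) m1(1) ar(2)] m1 c by simp
  also have "\<dots> = Cmp C ki (Cmp C ps (Cmp C hi h'))"
    using A[OF ar(5) ar(4) ar(3)] c by simp
  also have "\<dots> = Cmp C ki (Cmp C ps (Cmp C h1 h0))" using e1 by simp
  also have "\<dots> = Cmp C ki (Cmp C (Cmp C ps h1) h0)" using A[OF ar(9) ar(8) ar(3)] c by simp
  finally have q: "Cmp C (Cmp C ki (Cmp C ps hi)) h' = Cmp C ki (Cmp C (Cmp C ps h1) h0)" .
  have s1: "Cmp C k' (Cmp C ki (Cmp C (Cmp C ps h1) h0)) = Cmp C (Cmp C k' ki) (Cmp C (Cmp C ps h1) h0)"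
    using A[OF m7(1) ar(2) ar(1)] m7 c by simp
  have s2: "Cmp C (Cmp C k0 k1) (Cmp C (Cmp C ps h1) h0) = Cmp C k0 (Cmp C k1 (Cmp C (Cmp C ps h1) h0))"
    using A[OF m7(1) ar(7) ar(6)] m7 c by simp
  have s3: "Cmp C k1 (Cmp C (Cmp C ps h1) h0) = Cmp C (Cmp C k1 (Cmp C ps h1)) h0"
    using A[OF ar(9) m3(1) ar(7)] m3 c by simp
  show ?thesis using q s1 s2 s3 e2 by simp
qed

theorem mainTheorem9:
  fixes C :: "('o,'m) cat"
  assumes "category C"
    and "is_functor C \<alpha> F" and "is_functor C \<beta> G" and "is_functor C \<gamma> H" and "is_functor C \<delta> K"
    and "is_transformation C \<alpha> \<beta> \<sigma> \<tau> n F G \<phi>"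
    and "is_transformation C \<gamma> \<delta> \<eta> \<theta> m H K \<psi>"
    and "i < m" and "j < m" and "j \<noteq> i"
    and "dinatural C \<gamma> \<delta> \<eta> \<theta> m H K \<psi> i"
    and "dinatural C \<gamma> \<delta> \<eta> \<theta> m H K \<psi> j"
  shows "dinatural C (sub_var \<gamma> \<eta> i \<alpha> \<beta>) (sub_var \<delta> \<theta> i \<beta> \<alpha>)
           ((!) (sub_type \<gamma> \<eta> i n \<alpha> \<sigma> \<beta> \<tau>)) ((!) (sub_type \<delta> \<theta> i n \<beta> \<tau> \<alpha> \<sigma>))
           (m - 1 + n) (sub_functor \<gamma> \<eta> i \<alpha> \<beta> H F G) (sub_functor \<delta> \<theta> i \<beta> \<alpha> K G F)
           (hcomp C \<alpha> \<sigma> F \<phi> n \<gamma> \<eta> H \<delta> \<theta> K \<psi> m i) (reix i n j)"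
proof -
  note cat = assms(1)
  have ij: "i \<noteq> j" using assms(10) by simp
  have sig: "\<forall>k<length \<alpha>. \<sigma> k < n" and tau: "\<forall>k<length \<beta>. \<tau> k < n"
    and phiT: "\<And>A. length A = n \<Longrightarrow> set A \<subseteq> Obj C \<Longrightarrow> \<phi> A \<in> Arr C \<and> Dom C (\<phi> A) = fob F (tup A \<sigma> (length \<alpha>))
        \<and> Cod C (\<phi> A) = fob G (tup A \<tau> (length \<beta>))"
    using assms(6) unfolding is_transformation_def by blast+
  have eta: "\<forall>u<length \<gamma>. \<eta> u < m" and theta: "\<forall>u<length \<delta>. \<theta> u < m"
    and psiT: "\<And>B. length B = m \<Longrightarrow> set B \<subseteq> Obj C \<Longrightarrow> \<psi> B \<in> Arr C \<and> Dom C (\<psi> B) = fob H (tup B \<eta> (length \<gamma>))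
        \<and> Cod C (\<psi> B) = fob K (tup B \<theta> (length \<delta>))"
    using assms(7) unfolding is_transformation_def by blast+
  show ?thesis unfolding dinatural_def Let_def
  proof (intro allI impI)
    fix V f assume HV: "length V = m - 1 + n \<and> set V \<subseteq> Obj C \<and> f \<in> Arr C"
    hence lV: "length V = m - 1 + n" and oV: "set V \<subseteq> Obj C" and fA: "f \<in> Arr C" by auto
    define a where "a = Dom C f"
    define b where "b = Cod C f"
    define A where "A = take n (drop i V)"
    define FA where "FA = fob F (tup A \<sigma> (length \<alpha>))"
    define GA where "GA = fob G (tup A \<tau> (length \<beta>))"
    define p where "p = \<phi> A"
    define eo where "eo = (\<lambda>l. V ! reix i n l)"
    define eO where "eO = (\<lambda>l. Idm C (V ! reix i n l))"
    define Bx where "Bx = (\<lambda>c. map (\<lambda>l. if l = i then FA else if l = j then c else V ! reix i n l) [0..<m])"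
    define hm where "hm = (\<lambda>X Y jX jY. fmor H (map (hv \<gamma> \<eta> i j eO X Y jX jY) [0..<length \<gamma>]))"
    define km where "km = (\<lambda>X Y jX jY. fmor K (map (hv \<delta> \<theta> i j eO X Y jX jY) [0..<length \<delta>]))"
    have iV: "i + n \<le> length V" using lV assms(8) by simp
    have lA: "length A = n" unfolding A_def using iV by simp
    have oA: "set A \<subseteq> Obj C" unfolding A_def using oV
      by (meson set_drop_subset set_take_subset subset_trans)
    have pT: "p \<in> Arr C" "Dom C p = FA" "Cod C p = GA"
      using phiT[OF lA oA] unfolding p_def FA_def GA_def by auto
    have ab: "a \<in> Obj C" "b \<in> Obj C" "Dom C f = a" "Cod C f = b"
      using cat_dc[OF cat fA] a_def b_def by auto
    have FG: "FA \<in> Obj C" "GA \<in> Obj C" using cat_dc[OF cat pT(1)] pT by auto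
    have reixV: "reix i n l < length V" if "l < m" "l \<noteq> i" for l
      using that lV assms(8) unfolding reix_def by auto
    have eoO: "eo l \<in> Obj C" if "l < m" "l \<noteq> i" for l
      unfolding eo_def using reixV[OF that] oV by (auto intro!: subsetD[OF oV])
    have idO: "Idm C x \<in> Arr C \<and> Dom C (Idm C x) = x \<and> Cod C (Idm C x) = x" if "x \<in> Obj C" for x
      using cat_id[OF cat that] .
    have jne: "i + k \<noteq> reix i n j" if "k < n" for k
      unfolding reix_def using that assms(10) by auto
    have eOc: "\<forall>u<length \<gamma>. \<eta> u \<noteq> i \<longrightarrow> \<eta> u \<noteq> j \<longrightarrow> eO (\<eta> u) \<in> Arr C \<and> Dom C (eO (\<eta> u)) = eo (\<eta> u) \<and> Cod C (eO (\<eta> u)) = eo (\<eta> u)"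
      using eta eoO idO unfolding eO_def eo_def by auto
    have eOd: "\<forall>u<length \<delta>. \<theta> u \<noteq> i \<longrightarrow> \<theta> u \<noteq> j \<longrightarrow> eO (\<theta> u) \<in> Arr C \<and> Dom C (eO (\<theta> u)) = eo (\<theta> u) \<and> Cod C (eO (\<theta> u)) = eo (\<theta> u)"
      using theta eoO idO unfolding eO_def eo_def by auto
    have idcmp: "Cmp C (Idm C x) (Idm C x) = Idm C x" if "x \<in> Obj C" for x
      using cat_idl[OF cat, of "Idm C x" x] idO[OF that] by simp
    have eOc2: "\<forall>u<length \<gamma>. \<eta> u \<noteq> i \<longrightarrow> \<eta> u \<noteq> j \<longrightarrow> eO (\<eta> u) \<in> Arr C \<and> Dom C (eO (\<eta> u)) = Cod C (eO (\<eta> u))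
        \<and> Cmp C (eO (\<eta> u)) (eO (\<eta> u)) = eO (\<eta> u)"
      using eta eoO idO idcmp unfolding eO_def eo_def by auto
    have eOd2: "\<forall>u<length \<delta>. \<theta> u \<noteq> i \<longrightarrow> \<theta> u \<noteq> j \<longrightarrow> eO (\<theta> u) \<in> Arr C \<and> Dom C (eO (\<theta> u)) = Cod C (eO (\<theta> u))
        \<and> Cmp C (eO (\<theta> u)) (eO (\<theta> u)) = eO (\<theta> u)"
      using theta eoO idO idcmp unfolding eO_def eo_def by auto
    note hA = hmap_arr[OF assms(4) ij eOc, folded hm_def]
    have hmA: "hm X Y jX jY \<in> Arr C"
      and hmD: "Dom C (hm X Y jX jY) = fob H (map (hv \<gamma> \<eta> i j eo (Cod C X) (Dom C Y) (Cod C jX) (Dom C jY)) [0..<length \<gamma>])"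
      and hmC: "Cod C (hm X Y jX jY) = fob H (map (hv \<gamma> \<eta> i j eo (Dom C X) (Cod C Y) (Dom C jX) (Cod C jY)) [0..<length \<gamma>])"
      if "X \<in> Arr C" "Y \<in> Arr C" "jX \<in> Arr C" "jY \<in> Arr C" for X Y jX jY
      using hmap_arr[OF assms(4) ij eOc that] unfolding hm_def by auto
    have kmA: "km X Y jX jY \<in> Arr C"
      and kmD: "Dom C (km X Y jX jY) = fob K (map (hv \<delta> \<theta> i j eo (Cod C X) (Dom C Y) (Cod C jX) (Dom C jY)) [0..<length \<delta>])"
      and kmC: "Cod C (km X Y jX jY) = fob K (map (hv \<delta> \<theta> i j eo (Dom C X) (Cod C Y) (Dom C jX) (Cod C jY)) [0..<length \<delta>])"
      if "X \<in> Arr C" "Y \<in> Arr C" "jX \<in> Arr C" "jY \<in> Arr C" for X Y jX jY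
      using hmap_arr[OF assms(5) ij eOd that] unfolding km_def by auto
    have hmM: "Cmp C (hm gX gY gjX gjY) (hm fX fY fjX fjY) = hm (Cmp C fX gX) (Cmp C gY fY) (Cmp C fjX gjX) (Cmp C gjY fjY)"
      if "fX \<in> Arr C" "fY \<in> Arr C" "fjX \<in> Arr C" "fjY \<in> Arr C"
       "gX \<in> Arr C" "gY \<in> Arr C" "gjX \<in> Arr C" "gjY \<in> Arr C"
       "Cod C fY = Dom C gY" "Cod C gX = Dom C fX" "Cod C fjY = Dom C gjY" "Cod C gjX = Dom C fjX"
      for fX fY fjX fjY gX gY gjX gjY
      using hmap_comp[OF assms(4) ij eOc2 that] unfolding hm_def .
    have kmM: "Cmp C (km gX gY gjX gjY) (km fX fY fjX fjY) = km (Cmp C fX gX) (Cmp C gY fY) (Cmp C fjX gjX) (Cmp C gjY fjY)"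
      if "fX \<in> Arr C" "fY \<in> Arr C" "fjX \<in> Arr C" "fjY \<in> Arr C"
       "gX \<in> Arr C" "gY \<in> Arr C" "gjX \<in> Arr C" "gjY \<in> Arr C"
       "Cod C fY = Dom C gY" "Cod C gX = Dom C fX" "Cod C fjY = Dom C gjY" "Cod C gjX = Dom C fjX"
      for fX fY fjX fjY gX gY gjX gjY
      using hmap_comp[OF assms(5) ij eOd2 that] unfolding km_def .
    have cs: "Cmp C (Idm C GA) p = p" "Cmp C p (Idm C FA) = p" "Cmp C f (Idm C a) = f" "Cmp C (Idm C b) f = f"
      using cat_idl[OF cat] cat_idr[OF cat] pT fA ab by auto
    have lBx: "length (Bx c) = m" for c unfolding Bx_def by simp
    have nBx: "Bx c ! l = (if l = i then FA else if l = j then c else eo l)" if "l < m" for c l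
      unfolding Bx_def eo_def using that by simp
    have oBx: "set (Bx c) \<subseteq> Obj C" if "c \<in> Obj C" for c
      unfolding Bx_def using FG that eoO[unfolded eo_def] by auto
    have tBg: "tup (Bx c) \<eta> (length \<gamma>) = map (hv \<gamma> \<eta> i j eo FA FA c c) [0..<length \<gamma>]" for c
      unfolding tup_def hv_def using eta nBx by (auto intro!: map_cong)
    have tBd: "tup (Bx c) \<theta> (length \<delta>) = map (hv \<delta> \<theta> i j eo FA FA c c) [0..<length \<delta>]" for c
      unfolding tup_def hv_def using theta nBx by (auto intro!: map_cong)
    have psA: "\<psi> (Bx c) \<in> Arr C" and psD: "Dom C (\<psi> (Bx c)) = fob H (map (hv \<gamma> \<eta> i j eo FA FA c c) [0..<length \<gamma>])"
      and psC: "Cod C (\<psi> (Bx c)) = fob K (map (hv \<delta> \<theta> i j eo FA FA c c) [0..<length \<delta>])"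
      if "c \<in> Obj C" for c
      using psiT[OF lBx oBx[OF that]] unfolding tBg tBd by auto
    have F1: "fmor (sub_functor \<gamma> \<eta> i \<alpha> \<beta> H F G)
      (subst (sub_var \<gamma> \<eta> i \<alpha> \<beta>) ((!) (sub_type \<gamma> \<eta> i n \<alpha> \<sigma> \<beta> \<tau>)) (\<lambda>k. Idm C (V!k)) (reix i n j) X Y)
      = hm (Idm C GA) (Idm C FA) X Y" for X Y
      using sub_functor_subst[OF assms(2) assms(3) sig tau eta assms(8,9,10) lV oV]
      unfolding hm_def eO_def FA_def GA_def A_def .
    have F2: "fmor (sub_functor \<delta> \<theta> i \<beta> \<alpha> K G F)
      (subst (sub_var \<delta> \<theta> i \<beta> \<alpha>) ((!) (sub_type \<delta> \<theta> i n \<beta> \<tau> \<alpha> \<sigma>)) (\<lambda>k. Idm C (V!k)) (reix i n j) X Y)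
      = km (Idm C FA) (Idm C GA) X Y" for X Y
      using sub_functor_subst[OF assms(3) assms(2) tau sig theta assms(8,9,10) lV oV]
      unfolding km_def eO_def FA_def GA_def A_def .
    have F3: "hcomp C \<alpha> \<sigma> F \<phi> n \<gamma> \<eta> H \<delta> \<theta> K \<psi> m i (V[reix i n j := c])
       = Cmp C (km (Idm C FA) p (Idm C c) (Idm C c)) (Cmp C (\<psi> (Bx c)) (hm p (Idm C FA) (Idm C c) (Idm C c)))"
      if "c \<in> Obj C" for c
    proof -
      have tk: "take n (drop i (V[reix i n j := c])) = A"
        by (rule nth_equalityI) (use lV iV jne in \<open>auto simp: A_def intro!: nth_list_update_neq[OF not_sym]\<close>)
      have hB: "map (\<lambda>l. if l = i then FA else if l < i then V[reix i n j := c] ! l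
              else V[reix i n j := c] ! (l - 1 + n)) [0..<m] = Bx c"
        unfolding Bx_def
      proof (rule map_cong[OF refl])
        fix l assume "l \<in> set [0..<m]"
        hence l: "l < m" by simp
        show "(if l = i then FA else if l < i then V[reix i n j := c] ! l else V[reix i n j := c] ! (l - 1 + n)) =
          (if l = i then FA else if l = j then c else V ! reix i n l)"
        proof (cases "l = i")
          case False
          have "(if l < i then V[reix i n j := c] ! l else V[reix i n j := c] ! (l - 1 + n)) = V[reix i n j := c] ! reix i n l"
            unfolding reix_def by simp
          also have "\<dots> = (if l = j then c else V ! reix i n l)"
            using reixV[OF l False] reix_inj[OF False assms(10), of n] by (auto simp: nth_list_update_neq)
          finally show ?thesis using False by simp
        qed simp
      qed
      have s1: "subst \<delta> \<theta> (\<lambda>l. Idm C (Bx c ! l)) i (Idm C FA) p = map (hv \<delta> \<theta> i j eO (Idm C FA) p (Idm C c) (Idm C c)) [0..<length \<delta>]"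
        by (rule subst_i_hv) (use theta nBx assms(9,10) in \<open>auto simp: eO_def eo_def\<close>)
      have s2: "subst \<gamma> \<eta> (\<lambda>l. Idm C (Bx c ! l)) i p (Idm C FA) = map (hv \<gamma> \<eta> i j eO p (Idm C FA) (Idm C c) (Idm C c)) [0..<length \<gamma>]"
        by (rule subst_i_hv) (use eta nBx assms(9,10) in \<open>auto simp: eO_def eo_def\<close>)
      show ?thesis unfolding hcomp_def Let_def tk FA_def[symmetric] hB p_def[symmetric] s1 s2 km_def hm_def ..
    qed
    have DN: "Cmp C (km (Idm C FA) (Idm C FA) (Idm C a) f) (Cmp C (\<psi> (Bx a)) (hm (Idm C FA) (Idm C FA) f (Idm C a)))
      = Cmp C (km (Idm C FA) (Idm C FA) f (Idm C b)) (Cmp C (\<psi> (Bx b)) (hm (Idm C FA) (Idm C FA) (Idm C b) f))"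
    proof -
      have upd: "(Bx a)[j := c] = Bx c" for c
        by (rule nth_equalityI) (use assms(9,10) in \<open>auto simp: lBx nBx nth_list_update\<close>)
      have s: "subst \<gamma> \<eta> (\<lambda>l. Idm C (Bx a ! l)) j X Y = map (hv \<gamma> \<eta> i j eO (Idm C FA) (Idm C FA) X Y) [0..<length \<gamma>]" for X Y
        by (rule subst_j_hv) (use eta nBx assms(8,10) in \<open>auto simp: eO_def eo_def\<close>)
      have t: "subst \<delta> \<theta> (\<lambda>l. Idm C (Bx a ! l)) j X Y = map (hv \<delta> \<theta> i j eO (Idm C FA) (Idm C FA) X Y) [0..<length \<delta>]" for X Y
        by (rule subst_j_hv) (use theta nBx assms(8,10) in \<open>auto simp: eO_def eo_def\<close>)
      have "length (Bx a) = m \<and> set (Bx a) \<subseteq> Obj C \<and> f \<in> Arr C" using lBx oBx ab fA by auto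
      note X = assms(12)[unfolded dinatural_def Let_def, rule_format, OF this, folded a_def b_def]
      show ?thesis using X unfolding hm_def km_def upd s t .
    qed
    note simps = fA pT ab FG idO idcmp cs hmA hmD hmC kmA kmD kmC psA psD psC
    have L: "Cmp C (km (Idm C FA) (Idm C GA) (Idm C a) f)
        (Cmp C (Cmp C (km (Idm C FA) p (Idm C a) (Idm C a)) (Cmp C (\<psi> (Bx a)) (hm p (Idm C FA) (Idm C a) (Idm C a))))
          (hm (Idm C GA) (Idm C FA) f (Idm C a)))
      = Cmp C (km (Idm C FA) p (Idm C a) (Idm C b))
          (Cmp C (Cmp C (km (Idm C FA) (Idm C FA) (Idm C a) f) (Cmp C (\<psi> (Bx a)) (hm (Idm C FA) (Idm C FA) f (Idm C a))))
            (hm p (Idm C FA) (Idm C b) (Idm C a)))"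
      by (rule regroup[OF cat]) (simp_all add: simps hmM kmM)
    have R: "Cmp C (km (Idm C FA) (Idm C GA) f (Idm C b))
        (Cmp C (Cmp C (km (Idm C FA) p (Idm C b) (Idm C b)) (Cmp C (\<psi> (Bx b)) (hm p (Idm C FA) (Idm C b) (Idm C b))))
          (hm (Idm C GA) (Idm C FA) (Idm C b) f))
      = Cmp C (km (Idm C FA) p (Idm C a) (Idm C b))
          (Cmp C (Cmp C (km (Idm C FA) (Idm C FA) f (Idm C b)) (Cmp C (\<psi> (Bx b)) (hm (Idm C FA) (Idm C FA) (Idm C b) f)))
            (hm p (Idm C FA) (Idm C b) (Idm C a)))"
      by (rule regroup[OF cat]) (simp_all add: simps hmM kmM)
    show "Cmp C (fmor (sub_functor \<delta> \<theta> i \<beta> \<alpha> K G F) (subst (sub_var \<delta> \<theta> i \<beta> \<alpha>) ((!) (sub_type \<delta> \<theta> i n \<beta> \<tau> \<alpha> \<sigma>)) (\<lambda>k. Idm C (V ! k)) (reix i n j) (Idm C (Dom C f)) f))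
        (Cmp C (hcomp C \<alpha> \<sigma> F \<phi> n \<gamma> \<eta> H \<delta> \<theta> K \<psi> m i (V[reix i n j := Dom C f]))
          (fmor (sub_functor \<gamma> \<eta> i \<alpha> \<beta> H F G) (subst (sub_var \<gamma> \<eta> i \<alpha> \<beta>) ((!) (sub_type \<gamma> \<eta> i n \<alpha> \<sigma> \<beta> \<tau>)) (\<lambda>k. Idm C (V ! k)) (reix i n j) f (Idm C (Dom C f)))))
      = Cmp C (fmor (sub_functor \<delta> \<theta> i \<beta> \<alpha> K G F) (subst (sub_var \<delta> \<theta> i \<beta> \<alpha>) ((!) (sub_type \<delta> \<theta> i n \<beta> \<tau> \<alpha> \<sigma>)) (\<lambda>k. Idm C (V ! k)) (reix i n j) f (Idm C (Cod C f))))
        (Cmp C (hcomp C \<alpha> \<sigma> F \<phi> n \<gamma> \<eta> H \<delta> \<theta> K \<psi> m i (V[reix i n j := Cod C f]))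
          (fmor (sub_functor \<gamma> \<eta> i \<alpha> \<beta> H F G) (subst (sub_var \<gamma> \<eta> i \<alpha> \<beta>) ((!) (sub_type \<gamma> \<eta> i n \<alpha> \<sigma> \<beta> \<tau>)) (\<lambda>k. Idm C (V ! k)) (reix i n j) (Idm C (Cod C f)) f)))"
      unfolding a_def[symmetric] b_def[symmetric] F1 F2 F3[OF ab(1)] F3[OF ab(2)] L R DN ..
  qed
qed

end
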